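(* Let $\langle B,\wedge,{}'\rangle$ be an algebra with $\wedge$ binary and ${}'$ unary satisfying $x\wedge y\approx y\wedge x$, $x\wedge(y\wedge z)\approx(x\wedge y)\wedge z$, $x''\approx x$, and $x'\approx (x\wedge y)'\wedge(x\wedge y')'$. Then for all $x,y,z\in B$, writing $0=z\wedge z'$, we have $(x\wedge y)'=0'\wedge(x\wedge y\wedge x)'$.
   Context: By associativity, $x\wedge y\wedge x$ is unambiguous. In such an algebra the element $z\wedge z'$ does not depend on $z$; the paper denotes it $0$. *)

theory Defs
  imports Main
begin

end

theory Submission
  imports Defs
begin

theorem lemma2p7:
  fixes meet :: "'a \<Rightarrow> 'a \<Rightarrow> 'a" and c :: "'a \<Rightarrow> 'a"
  assumes comm: "\<And>x y. meet x y = meet y x"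
    and assoc: "\<And>x y z. meet x (meet y z) = meet (meet x y) z"
    and invol: "\<And>x. c (c x) = x"
    and ax: "\<And>x y. c x = meet (c (meet x y)) (c (meet x (c y)))"
  shows "\<And>x y z. c (meet x y) = meet (c (meet z (c z))) (c (meet (meet x y) x))"
proof -
  have idem: "\<And>x. meet x x = x"
    by (smt (verit, ccfv_threshold) assoc ax comm invol)
  have zero: "\<And>x y. meet x (c x) = meet y (c y)"
    by (smt (verit, ccfv_SIG) assoc ax comm invol)
  have one: "\<And>x z. meet (c (meet z (c z))) x = x"
    by (metis ax comm idem invol zero)
  fix x y z
  have "meet (meet x y) x = meet x y"
    by (metis assoc comm idem)
  then show "c (meet x y) = meet (c (meet z (c z))) (c (meet (meet x y) x))"
    using one by simp
qed

end
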